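(* Let $n$ be a positive integer with $n\equiv 4\pmod 6$ and let $t=\lfloor n/3\rfloor$. Then the collection of subgroups of $S_n$ consisting of: all stabilizers of partitions of $\{1,\dots,n\}$ into two blocks of size $n/2$; $A_n$; and, for every $i$ with $1\le i\le t$ and $i\neq t-1$, all setwise stabilizers of $i$-element subsets of $\{1,\dots,n\}$, is a cover of $S_n$. In other words, the subgroups $S_{t-1}\times S_{n-t+1}$ can be removed from the cover consisting of all subgroups $S_{n/2}\wr S_2$, $A_n$, and $S_i\times S_{n-i}$ ($1\le i\le t$) while still covering $S_n$.
   Context: $S_n$ is the symmetric group on $\{1,\dots,n\}$. The stabilizer of a partition $\{B_1,B_2\}$ is the set of $g$ with $\{B_1^g,B_2^g\}=\{B_1,B_2\}$ (isomorphic to $S_{n/2}\wr S_2$); the setwise stabilizer of an $i$-subset is isomorphic to $S_i\times S_{n-i}$. A cover of a group is a collection of proper subgroups whose union is the group. *)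

theory Defs
  imports "HOL-Algebra.Sym_Groups"
begin

definition is_cover :: "('a, 'b) monoid_scheme \<Rightarrow> 'a set set \<Rightarrow> bool" where
  "is_cover G \<C> \<longleftrightarrow>
     (\<forall>H\<in>\<C>. subgroup H G \<and> H \<noteq> carrier G) \<and> \<Union>\<C> = carrier G"

definition partition_stabilizer :: "nat \<Rightarrow> nat set \<Rightarrow> nat set \<Rightarrow> (nat \<Rightarrow> nat) set" where
  "partition_stabilizer n B1 B2 =
     {g \<in> carrier (sym_group n). {g ` B1, g ` B2} = {B1, B2}}"

definition set_stabilizer :: "nat \<Rightarrow> nat set \<Rightarrow> (nat \<Rightarrow> nat) set" where
  "set_stabilizer n A = {g \<in> carrier (sym_group n). g ` A = A}"

end

theory Submission
  imports Defs
begin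


definition orb :: "('a \<Rightarrow> 'a) \<Rightarrow> 'a \<Rightarrow> 'a set" where
  "orb g x = set (support g x)"

lemma orb_eq: "permutation g \<Longrightarrow> orb g x = range (\<lambda>i. (g ^^ i) x)"
  unfolding orb_def by (rule support_set)

lemma orb_card: "permutation g \<Longrightarrow> card (orb g x) = least_power g x"
  unfolding orb_def using distinct_card[OF cycle_of_permutation[of g x]] by simp

lemma orb_self: "permutation g \<Longrightarrow> x \<in> orb g x"
  using orb_eq[of g x] by (metis funpow_0 rangeI)

lemma orb_finite: "finite (orb g x)"
  unfolding orb_def by simp

lemma orb_sub: assumes "g permutes S" "x \<in> S" shows "orb g x \<subseteq> S"
proof
  fix y assume "y \<in> orb g x"
  then obtain i where y: "y = (g ^^ i) x" unfolding orb_def by auto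
  have "(g ^^ i) permutes S" using permutes_funpow assms(1) by blast
  hence "(g ^^ i) x \<in> S" using assms(2) by (simp add: permutes_in_image)
  thus "y \<in> S" using y by simp
qed

lemma orb_inv: assumes "permutation g" shows "g ` orb g x = orb g x"
proof (rule endo_inj_surj)
  show "finite (orb g x)" by (rule orb_finite)
  show "g ` orb g x \<subseteq> orb g x"
    unfolding orb_def support_set[OF assms] 
  proof (clarsimp)
    fix i show "g ((g ^^ i) x) \<in> range (\<lambda>i. (g ^^ i) x)"
      by (rule range_eqI[of _ _ "Suc i"]) simp
  qed
  have "inj g" using assms by (simp add: bij_is_inj permutation_bijective)
  thus "inj_on g (orb g x)" by (rule inj_on_subset) simp
qed

lemma orb_disj: "permutation g \<Longrightarrow> y \<notin> orb g x \<Longrightarrow> orb g y \<inter> orb g x = {}"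
  unfolding orb_def using disjoint_support'[of g y x] by simp

lemma inv_diff: "inj g \<Longrightarrow> g ` S = S \<Longrightarrow> g ` T = T \<Longrightarrow> g ` (S - T) = S - T"
  by (simp add: image_set_diff)

lemma cycle_even: assumes "distinct cs" "cs \<noteq> []"
  shows "evenperm (cycle_of_list cs) = odd (length cs)"
proof -
  have "swapidseq (length cs - 1) (cycle_of_list cs)"
    by (rule swapidseq_ext_imp_swapidseq[OF swapidseq_ext_of_cycles[OF assms(1)]])
  moreover have "even (length cs - 1) = odd (length cs)" using assms(2) by (cases cs) auto
  ultimately show ?thesis by (rule evenperm_unique)
qed

lemma funpow_mod: assumes "permutation g" "(g ^^ m) x = (g ^^ m') x" "m \<le> m'"
  shows "m mod least_power g x = m' mod least_power g x"
proof -
  have "inj g" using assms(1) by (simp add: bij_is_inj permutation_bijective)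
  hence "(g ^^ (m' - m)) x = x" by (rule funpow_diff[OF _ assms(3,2)])
  hence "least_power g x dvd (m' - m)" by (simp add: least_power_dvd[OF assms(1)])
  thus ?thesis using assms(3) mod_eq_dvd_iff_nat[of m m' "least_power g x"] by simp
qed

lemma funpow_in_inv: assumes "g ` T = T" "x \<in> T" shows "(g ^^ i) x \<in> T"
proof (induction i)
  case 0 thus ?case using assms(2) by simp
next
  case (Suc i)
  hence "g ((g ^^ i) x) \<in> g ` T" by (rule imageI)
  thus ?case using assms(1) by simp
qed

lemma orb_sub': assumes "permutation g" "g ` T = T" "x \<in> T" shows "orb g x \<subseteq> T"
  using funpow_in_inv[OF assms(2,3)] orb_eq[OF assms(1)] by auto

lemma funpow_parity: assumes "permutation g" "even (least_power g x)"
  "(g ^^ m) x = (g ^^ m') x" shows "even m = even m'"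
proof -
  let ?L = "least_power g x"
  have "m mod ?L = m' mod ?L"
  proof (cases "m \<le> m'")
    case True thus ?thesis using funpow_mod[OF assms(1,3)] by simp
  next
    case False thus ?thesis using funpow_mod[OF assms(1) assms(3)[symmetric]] by simp
  qed
  hence "(m mod ?L) mod 2 = (m' mod ?L) mod 2" by simp
  thus ?thesis using assms(2) by (simp add: mod_mod_cancel even_iff_mod_2_eq_zero)
qed

lemma half_orbit: assumes "permutation g" "even (least_power g x)"
  shows "g ` range (\<lambda>j. (g ^^ (2*j)) x) = orb g x - range (\<lambda>j. (g ^^ (2*j)) x)"
proof
  show "g ` range (\<lambda>j. (g ^^ (2*j)) x) \<subseteq> orb g x - range (\<lambda>j. (g ^^ (2*j)) x)"
  proof
    fix z assume "z \<in> g ` range (\<lambda>j. (g ^^ (2*j)) x)"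
    then obtain j where z: "z = (g ^^ Suc (2*j)) x" by auto
    have "z \<in> range (\<lambda>i. (g ^^ i) x)" unfolding z by (rule rangeI)
    hence "z \<in> orb g x" using orb_eq[OF assms(1)] by simp
    moreover have "z \<notin> range (\<lambda>j. (g ^^ (2*j)) x)"
    proof
      assume "z \<in> range (\<lambda>j. (g ^^ (2*j)) x)"
      then obtain i where "(g ^^ Suc (2*j)) x = (g ^^ (2*i)) x" using z by auto
      from funpow_parity[OF assms this] show False by simp
    qed
    ultimately show "z \<in> orb g x - range (\<lambda>j. (g ^^ (2*j)) x)" by simp
  qed
next
  show "orb g x - range (\<lambda>j. (g ^^ (2*j)) x) \<subseteq> g ` range (\<lambda>j. (g ^^ (2*j)) x)"
  proof
    fix z assume z: "z \<in> orb g x - range (\<lambda>j. (g ^^ (2*j)) x)"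
    then obtain m where m: "z = (g ^^ m) x" using orb_eq[OF assms(1)] by auto
    show "z \<in> g ` range (\<lambda>j. (g ^^ (2*j)) x)"
    proof (cases "even m")
      case True
      then obtain j where "m = 2*j" by blast
      thus ?thesis using z m by auto
    next
      case False
      then obtain j where "m = Suc (2*j)" by (metis oddE Suc_eq_plus1)
      hence "z = g ((g ^^ (2*j)) x)" using m by simp
      thus ?thesis by auto
    qed
  qed
qed

lemma swap_ex: assumes "permutation g" "finite T" "g ` T = T" "\<forall>x\<in>T. even (least_power g x)"
  shows "\<exists>B \<subseteq> T. g ` B = T - B"
  using assms(2-4)
proof (induction "card T" arbitrary: T rule: less_induct)
  case less
  show ?case
  proof (cases "T = {}")
    case True thus ?thesis by simp
  next
    case False
    then obtain x where x: "x \<in> T" by blast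
    define Ox where "Ox = orb g x"
    define BO where "BO = range (\<lambda>j. (g ^^ (2*j)) x)"
    have OT: "Ox \<subseteq> T" unfolding Ox_def by (rule orb_sub'[OF assms(1) less.prems(2) x])
    have inj: "inj g" using assms(1) by (simp add: bij_is_inj permutation_bijective)
    have gOx: "g ` Ox = Ox" unfolding Ox_def by (rule orb_inv[OF assms(1)])
    have T': "g ` (T - Ox) = T - Ox" by (rule inv_diff[OF inj less.prems(2) gOx])
    have "x \<in> Ox" unfolding Ox_def by (rule orb_self[OF assms(1)])
    hence "T - Ox \<subset> T" using x by blast
    hence "card (T - Ox) < card T" by (rule psubset_card_mono[OF less.prems(1)])
    moreover have "finite (T - Ox)" using less.prems(1) by simp
    moreover have "\<forall>x\<in>T - Ox. even (least_power g x)" using less.prems(3) by simp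
    ultimately have "\<exists>B\<subseteq>T - Ox. g ` B = T - Ox - B"
      using less.hyps[of "T - Ox"] T' by blast
    then obtain B' where B': "B' \<subseteq> T - Ox" "g ` B' = (T - Ox) - B'" by blast
    have BO: "g ` BO = Ox - BO" unfolding BO_def Ox_def
      by (rule half_orbit[OF assms(1)]) (simp add: less.prems(3) x)
    have BOO: "BO \<subseteq> Ox" unfolding BO_def Ox_def using orb_eq[OF assms(1)] by auto
    have "g ` (BO \<union> B') = (Ox - BO) \<union> ((T - Ox) - B')"
      using BO B'(2) by (simp add: image_Un)
    also have "\<dots> = T - (BO \<union> B')" using B'(1) BOO OT by blast
    finally have "g ` (BO \<union> B') = T - (BO \<union> B')" .
    moreover have "BO \<union> B' \<subseteq> T" using BOO OT B' by auto
    ultimately show ?thesis by blast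
  qed
qed


definition Gd :: "nat \<Rightarrow> nat \<Rightarrow> nat \<Rightarrow> bool" where
  "Gd n t c \<longleftrightarrow> (1 \<le> c \<and> c \<le> t \<and> c \<noteq> t - 1) \<or> c = n div 2 \<or> (n - t \<le> c \<and> c < n \<and> c \<noteq> n - t + 1)"

lemma arith_core: fixes n t l a :: nat
  assumes "n mod 6 = 4" "t = n div 3" "odd l" "1 \<le> a" "l + a < n"
    "\<not> Gd n t l" "\<not> Gd n t a" "\<not> Gd n t (n - l - a)"
  shows False
proof -
  obtain k where k: "n = 6*k+4" using assms(1) by (metis mod_div_mult_eq add.commute mult.commute)
  hence t: "t = 2*k+1" using assms(2) by simp
  have h: "n div 2 = 3*k+2" using k by simp
  obtain m where m: "l = 2*m+1" using assms(3) by (metis oddE)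
  have G: "\<not> Gd n t c \<longleftrightarrow> \<not> ((1 \<le> c \<and> c \<le> 2*k+1 \<and> c \<noteq> 2*k) \<or> c = 3*k+2 \<or> (4*k+3 \<le> c \<and> c < 6*k+4 \<and> c \<noteq> 4*k+4))" for c
    unfolding Gd_def h unfolding k t by (simp add: add.commute)
  have "2*m+1 \<noteq> 2*k" by presburger
  hence "\<not> 2*m+1 \<le> 2*k+1" using assms(6) unfolding G m by linarith
  hence l1: "m \<ge> k+1" by linarith
  have a1: "a \<ge> 2*k" "a \<noteq> 2*k+1" using assms(7,4) unfolding G by linarith+
  have b1: "n - l - a \<ge> 2*k" "n - l - a \<noteq> 2*k+1" using assms(8,5) unfolding G by linarith+
  define b where "b = n - l - a"
  have sum: "2*m+1+a+b = 6*k+4" using assms(5) unfolding b_def k m by linarith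
  have "2*m \<le> 2*k+3" using sum a1(1) b1(1) unfolding b_def by linarith
  hence "m = k+1" using l1 by linarith
  show False using sum a1 b1 \<open>m = k+1\<close> unfolding b_def by linarith
qed


lemma key:
  fixes n t :: nat and g :: "nat \<Rightarrow> nat"
  assumes n6: "n mod 6 = 4" and tn: "t = n div 3" and gp: "g permutes {1..n}" and odd: "\<not> evenperm g"
  shows "(\<exists>A\<subseteq>{1..n}. g ` A = A \<and> Gd n t (card A)) \<or> (\<exists>B\<subseteq>{1..n}. g ` B = {1..n} - B)"
proof (rule ccontr)
  define S where "S = {1..n::nat}"
  assume "\<not> ?thesis"
  hence nA: "\<And>A. A \<subseteq> S \<Longrightarrow> g ` A = A \<Longrightarrow> \<not> Gd n t (card A)"
    and nB: "\<not> (\<exists>B\<subseteq>S. g ` B = S - B)" unfolding S_def by blast+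
  have finS: "finite S" and cardS: "card S = n" unfolding S_def by auto
  have gpS: "g permutes S" using gp unfolding S_def .
  have perm: "permutation g" using gpS finS permutation_permutes by blast
  have inj: "inj g" using perm by (simp add: bij_is_inj permutation_bijective)
  have gS: "g ` S = S" using gpS by (rule permutes_image)
  have "\<not> (\<forall>x\<in>S. even (least_power g x))"
  proof
    assume "\<forall>x\<in>S. even (least_power g x)"
    from swap_ex[OF perm finS gS this] nB show False by blast
  qed
  then obtain x0 where x0: "x0 \<in> S" "odd (least_power g x0)" by blast
  define O0 where "O0 = orb g x0"
  have O0S: "O0 \<subseteq> S" unfolding O0_def by (rule orb_sub[OF gpS x0(1)])
  have gO0: "g ` O0 = O0" unfolding O0_def by (rule orb_inv[OF perm])
  have cO0: "card O0 = least_power g x0" unfolding O0_def by (rule orb_card[OF perm])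
  define R where "R = S - O0"
  have gR: "g ` R = R" unfolding R_def by (rule inv_diff[OF inj gS gO0])
  have cR: "card R = n - card O0" unfolding R_def using O0S finS cardS by (simp add: card_Diff_subset finite_subset)
  have "R \<noteq> {}"
  proof
    assume "R = {}"
    hence "O0 = S" using O0S unfolding R_def by blast
    hence "odd n" using cO0 cardS x0(2) by simp
    thus False using n6 by presburger
  qed
  then obtain y where y: "y \<in> R" by blast
  define Oy where "Oy = orb g y"
  have yS: "y \<in> S" "y \<notin> O0" using y unfolding R_def by auto
  have OyS: "Oy \<subseteq> S" unfolding Oy_def by (rule orb_sub[OF gpS yS(1)])
  have disj: "Oy \<inter> O0 = {}" unfolding Oy_def O0_def by (rule orb_disj[OF perm]) (use yS(2) O0_def in simp)
  have OyR: "Oy \<subseteq> R" using OyS disj unfolding R_def by blast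
  have gOy: "g ` Oy = Oy" unfolding Oy_def by (rule orb_inv[OF perm])
  have cOy: "card Oy = least_power g y" unfolding Oy_def by (rule orb_card[OF perm])
  have "y \<in> Oy" unfolding Oy_def by (rule orb_self[OF perm])
  hence a1: "1 \<le> card Oy" using Oy_def orb_finite by (metis One_nat_def Suc_leI card_gt_0_iff empty_iff)
  show False
  proof (cases "R = Oy")
    case True
    define c0 where "c0 = cycle_of_list (support g x0)"
    define cy where "cy = cycle_of_list (support g y)"
    have eq: "g z = c0 (cy z)" for z
    proof -
      consider "z \<in> Oy" | "z \<in> O0" | "z \<notin> S" using True unfolding R_def by blast
      thus ?thesis
      proof cases
        case 1
        hence "cy z = g z" unfolding cy_def using cycle_restrict[OF perm] unfolding Oy_def orb_def by metis
        moreover have "g z \<in> Oy" using 1 gOy by blast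
        hence "g z \<notin> set (support g x0)" using disj unfolding O0_def orb_def by blast
        hence "c0 (g z) = g z" unfolding c0_def by (rule id_outside_supp)
        ultimately show ?thesis by simp
      next
        case 2
        hence "z \<notin> set (support g y)" using disj unfolding Oy_def orb_def by blast
        hence "cy z = z" unfolding cy_def by (rule id_outside_supp)
        moreover have "c0 z = g z" unfolding c0_def using cycle_restrict[OF perm] 2 unfolding O0_def orb_def by metis
        ultimately show ?thesis by simp
      next
        case 3
        hence "z \<notin> set (support g y)" "z \<notin> set (support g x0)"
          using OyS O0S unfolding Oy_def O0_def orb_def by blast+
        hence "cy z = z" "c0 z = z" unfolding cy_def c0_def by (simp_all add: id_outside_supp)
        moreover have "g z = z" using 3 gpS by (simp add: permutes_not_in)
        ultimately show ?thesis by simp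
      qed
    qed
    have "evenperm c0" unfolding c0_def
      using cycle_even[OF cycle_of_permutation[OF perm]] x0(2) least_power_of_permutation(2)[OF perm, of x0]
      by simp
    moreover have "card O0 \<le> n" using O0S finS cardS card_mono by metis
    have "even n" using n6 by presburger
    have "odd (card O0)" using cO0 x0(2) by simp
    have "odd (n - card O0)" using \<open>card O0 \<le> n\<close> \<open>even n\<close> \<open>odd (card O0)\<close> by presburger
    hence "odd (card Oy)" using True cR by simp
    hence "evenperm cy" unfolding cy_def
      using cycle_even[OF cycle_of_permutation[OF perm]] cOy least_power_of_permutation(2)[OF perm, of y]
      by simp
    moreover have "g = c0 \<circ> cy" using eq by (simp add: fun_eq_iff)
    ultimately have "evenperm (c0 \<circ> cy)" "g = c0 \<circ> cy"
      using evenperm_comp[OF permutation_of_cycle permutation_of_cycle, of "support g x0" "support g y"]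
      unfolding c0_def cy_def by simp_all
    thus False using odd by simp
  next
    case False
    define R' where "R' = R - Oy"
    have gR': "g ` R' = R'" unfolding R'_def by (rule inv_diff[OF inj gR gOy])
    have R'S: "R' \<subseteq> S" unfolding R'_def R_def by blast
    have cR': "card R' = n - card O0 - card Oy" unfolding R'_def using cR OyR finS 
      by (simp add: card_Diff_subset finite_subset R_def)
    have "R' \<noteq> {}" using False OyR unfolding R'_def by blast
    hence "card R' > 0" using R'S finS by (simp add: card_gt_0_iff finite_subset)
    hence lt: "card O0 + card Oy < n" using cR' by linarith
    show False
      using arith_core[OF n6 tn _ a1 lt nA[OF O0S gO0] nA[OF OyS gOy]] nA[OF R'S gR'] cR' x0(2) cO0
      by simp
  qed
qed



lemma setstab_subgroup: "subgroup (set_stabilizer n A) (sym_group n)"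
proof (rule group.subgroupI[OF sym_group_is_group])
  show "set_stabilizer n A \<subseteq> carrier (sym_group n)" unfolding set_stabilizer_def by blast
  have "id \<in> set_stabilizer n A" unfolding set_stabilizer_def sym_group_carrier by (simp add: permutes_id)
  thus "set_stabilizer n A \<noteq> {}" by blast
next
  fix a assume a: "a \<in> set_stabilizer n A"
  hence ap: "a permutes {1..n}" and aA: "a ` A = A" unfolding set_stabilizer_def sym_group_carrier by auto
  have "inv' a ` A = inv' a ` (a ` A)" using aA by simp
  also have "\<dots> = A" using permutes_inj[OF ap] by (simp add: image_inv_f_f)
  finally have "inv' a ` A = A" .
  moreover have "inv' a permutes {1..n}" using ap by (rule permutes_inv)
  moreover have "a \<in> carrier (sym_group n)" using ap sym_group_carrier by blast
  hence "inv\<^bsub>sym_group n\<^esub> a = inv' a" by (rule sym_group_inv_equality)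
  ultimately show "inv\<^bsub>sym_group n\<^esub> a \<in> set_stabilizer n A"
    unfolding set_stabilizer_def sym_group_carrier by simp
next
  fix a b assume "a \<in> set_stabilizer n A" "b \<in> set_stabilizer n A"
  hence ap: "a permutes {1..n}" and aA: "a ` A = A" and bp: "b permutes {1..n}" and bA: "b ` A = A"
    unfolding set_stabilizer_def sym_group_carrier by auto
  have "(a \<circ> b) ` A = a ` (b ` A)" by (rule image_comp[symmetric])
  hence "(a \<circ> b) ` A = A" using aA bA by simp
  thus "a \<otimes>\<^bsub>sym_group n\<^esub> b \<in> set_stabilizer n A"
    unfolding set_stabilizer_def sym_group_carrier sym_group_mult
    using permutes_compose[OF bp ap] by simp
qed

lemma partstab_subgroup: "subgroup (partition_stabilizer n B1 B2) (sym_group n)"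
proof (rule group.subgroupI[OF sym_group_is_group])
  show "partition_stabilizer n B1 B2 \<subseteq> carrier (sym_group n)" unfolding partition_stabilizer_def by blast
  have "id \<in> partition_stabilizer n B1 B2" unfolding partition_stabilizer_def sym_group_carrier by (simp add: permutes_id)
  thus "partition_stabilizer n B1 B2 \<noteq> {}" by blast
next
  fix a assume a: "a \<in> partition_stabilizer n B1 B2"
  hence ap: "a permutes {1..n}" and aB: "{a ` B1, a ` B2} = {B1, B2}"
    unfolding partition_stabilizer_def sym_group_carrier by auto
  have "{inv' a ` B1, inv' a ` B2} = (\<lambda>X. inv' a ` X) ` {B1, B2}" by simp
  also have "\<dots> = (\<lambda>X. inv' a ` X) ` {a ` B1, a ` B2}" using aB by simp
  also have "\<dots> = {B1, B2}" using permutes_inj[OF ap] by (simp add: image_inv_f_f)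
  finally have "{inv' a ` B1, inv' a ` B2} = {B1, B2}" .
  moreover have "inv' a permutes {1..n}" using ap by (rule permutes_inv)
  moreover have "a \<in> carrier (sym_group n)" using ap sym_group_carrier by blast
  hence "inv\<^bsub>sym_group n\<^esub> a = inv' a" by (rule sym_group_inv_equality)
  ultimately show "inv\<^bsub>sym_group n\<^esub> a \<in> partition_stabilizer n B1 B2"
    unfolding partition_stabilizer_def sym_group_carrier by simp
next
  fix a b assume "a \<in> partition_stabilizer n B1 B2" "b \<in> partition_stabilizer n B1 B2"
  hence ap: "a permutes {1..n}" and aB: "{a ` B1, a ` B2} = {B1, B2}"
    and bp: "b permutes {1..n}" and bB: "{b ` B1, b ` B2} = {B1, B2}"
    unfolding partition_stabilizer_def sym_group_carrier by auto
  have "{(a \<circ> b) ` B1, (a \<circ> b) ` B2} = (\<lambda>X. a ` X) ` {b ` B1, b ` B2}" by (simp add: image_comp)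
  also have "\<dots> = (\<lambda>X. a ` X) ` {B1, B2}" using bB by simp
  also have "\<dots> = {B1, B2}" using aB by simp
  finally show "a \<otimes>\<^bsub>sym_group n\<^esub> b \<in> partition_stabilizer n B1 B2"
    unfolding partition_stabilizer_def sym_group_carrier sym_group_mult
    using permutes_compose[OF bp ap] by simp
qed

lemma setstab_proper: assumes "a \<in> A" "b \<in> {1..n}" "b \<notin> A" "A \<subseteq> {1..n}"
  shows "set_stabilizer n A \<noteq> carrier (sym_group n)"
proof -
  let ?s = "transpose a b"
  have aS: "a \<in> {1..n}" using assms(1,4) by blast
  have sp: "?s permutes {1..n}" using aS assms(2) by (rule permutes_swap_id)
  have "b \<in> ?s ` A" using assms(1) by (rule image_eqI[rotated]) simp
  hence "?s ` A \<noteq> A" using assms(3) by blast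
  hence "?s \<notin> set_stabilizer n A" unfolding set_stabilizer_def by simp
  moreover have "?s \<in> carrier (sym_group n)" using sp by (simp add: sym_group_carrier)
  ultimately show ?thesis by blast
qed

lemma partstab_proper: assumes "a \<in> B1" "a' \<in> B1" "a \<noteq> a'" "b \<in> B2" "B1 \<inter> B2 = {}" "B1 \<union> B2 = {1..n}"
  shows "partition_stabilizer n B1 B2 \<noteq> carrier (sym_group n)"
proof -
  let ?s = "transpose a b"
  have aS: "a \<in> {1..n}" using assms(1,6) by (metis UnI1)
  have bS: "b \<in> {1..n}" using assms(4,6) by (metis UnI2)
  have sp: "?s permutes {1..n}" using aS bS by (rule permutes_swap_id)
  have ab: "a \<noteq> b" using assms(1,4,5) by blast
  have a'b: "a' \<noteq> b" using assms(2,4,5) by blast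
  have b1: "b \<in> ?s ` B1" using assms(1) by (rule image_eqI[rotated]) simp
  have b2: "a' \<in> ?s ` B1" using assms(2) by (rule image_eqI[rotated]) (use assms(3) a'b in simp)
  have n1: "?s ` B1 \<noteq> B1" using b1 assms(4,5) by blast
  have n2: "?s ` B1 \<noteq> B2" using b2 assms(2,5) by blast
  have "?s ` B1 \<notin> {B1, B2}" using n1 n2 by simp
  moreover have "?s ` B1 \<in> {?s ` B1, ?s ` B2}" by (rule insertI1)
  ultimately have "{?s ` B1, ?s ` B2} \<noteq> {B1, B2}" by metis
  hence "?s \<notin> partition_stabilizer n B1 B2" unfolding partition_stabilizer_def by simp
  moreover have "?s \<in> carrier (sym_group n)" using sp by (simp add: sym_group_carrier)
  ultimately show ?thesis by blast
qed



lemma two_elems: assumes "2 \<le> card A" obtains a a' where "a \<in> A" "a' \<in> A" "a \<noteq> a'"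
proof -
  from assms have "Suc 1 \<le> card A" by simp
  then obtain a B where AB: "A = insert a B" "a \<notin> B" "1 \<le> card B" unfolding card_le_Suc_iff by blast
  hence "B \<noteq> {}" by auto
  then obtain a' where "a' \<in> B" by blast
  thus ?thesis using that AB by blast
qed

lemma mem_F1: assumes "g permutes {1..n}" "B1 \<union> B2 = {1..n}" "B1 \<inter> B2 = {}" "card B1 = n div 2" "card B2 = n div 2"
  "{g ` B1, g ` B2} = {B1, B2}"
  shows "g \<in> \<Union>({partition_stabilizer n B1 B2 | B1 B2.
          B1 \<union> B2 = {1..n} \<and> B1 \<inter> B2 = {} \<and> card B1 = n div 2 \<and> card B2 = n div 2}
      \<union> {carrier (alt_group n)}
      \<union> {set_stabilizer n A | A i.
          1 \<le> i \<and> i \<le> t \<and> i \<noteq> t - 1 \<and> A \<subseteq> {1..n} \<and> card A = i})"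
proof (rule UnionI)
  show "g \<in> partition_stabilizer n B1 B2" unfolding partition_stabilizer_def sym_group_carrier using assms by simp
  show "partition_stabilizer n B1 B2 \<in> {partition_stabilizer n B1 B2 | B1 B2.
          B1 \<union> B2 = {1..n} \<and> B1 \<inter> B2 = {} \<and> card B1 = n div 2 \<and> card B2 = n div 2}
      \<union> {carrier (alt_group n)}
      \<union> {set_stabilizer n A | A i.
          1 \<le> i \<and> i \<le> t \<and> i \<noteq> t - 1 \<and> A \<subseteq> {1..n} \<and> card A = i}"
    using assms(2-5) by blast
qed

lemma mem_F3: assumes "g permutes {1..n}" "g ` A = A" "1 \<le> card A" "card A \<le> t" "card A \<noteq> t - 1" "A \<subseteq> {1..n}"
  shows "g \<in> \<Union>({partition_stabilizer n B1 B2 | B1 B2.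
          B1 \<union> B2 = {1..n} \<and> B1 \<inter> B2 = {} \<and> card B1 = n div 2 \<and> card B2 = n div 2}
      \<union> {carrier (alt_group n)}
      \<union> {set_stabilizer n A | A i.
          1 \<le> i \<and> i \<le> t \<and> i \<noteq> t - 1 \<and> A \<subseteq> {1..n} \<and> card A = i})"
proof (rule UnionI)
  show "g \<in> set_stabilizer n A" unfolding set_stabilizer_def sym_group_carrier using assms by simp
  show "set_stabilizer n A \<in> {partition_stabilizer n B1 B2 | B1 B2.
          B1 \<union> B2 = {1..n} \<and> B1 \<inter> B2 = {} \<and> card B1 = n div 2 \<and> card B2 = n div 2}
      \<union> {carrier (alt_group n)}
      \<union> {set_stabilizer n A | A i.
          1 \<le> i \<and> i \<le> t \<and> i \<noteq> t - 1 \<and> A \<subseteq> {1..n} \<and> card A = i}"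
    using assms(3-6) by blast
qed

theorem lemma5p2:
  fixes n t :: nat
  assumes "n > 0" and "n mod 6 = 4" and "t = n div 3"
  shows "is_cover (sym_group n)
     ({partition_stabilizer n B1 B2 | B1 B2.
          B1 \<union> B2 = {1..n} \<and> B1 \<inter> B2 = {} \<and> card B1 = n div 2 \<and> card B2 = n div 2}
      \<union> {carrier (alt_group n)}
      \<union> {set_stabilizer n A | A i.
          1 \<le> i \<and> i \<le> t \<and> i \<noteq> t - 1 \<and> A \<subseteq> {1..n} \<and> card A = i})"
    (is "is_cover _ ?C")
proof -
  obtain k where k: "n = 6*k+4" using assms(2) by (metis mod_div_mult_eq add.commute mult.commute)
  hence t: "t = 2*k+1" using assms(3) by simp
  have h: "n div 2 = 3*k+2" using k by simp
  define S where "S = {1..n}"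
  have finS: "finite S" and cardS: "card S = n" unfolding S_def by auto
  have sub: "\<forall>H\<in>?C. subgroup H (sym_group n) \<and> H \<noteq> carrier (sym_group n)"
  proof
    fix H assume "H \<in> ?C"
    hence "(\<exists>B1 B2. H = partition_stabilizer n B1 B2 \<and> B1 \<union> B2 = {1..n} \<and> B1 \<inter> B2 = {} \<and>
        card B1 = n div 2 \<and> card B2 = n div 2) \<or> H = carrier (alt_group n) \<or>
      (\<exists>A i. H = set_stabilizer n A \<and> 1 \<le> i \<and> i \<le> t \<and> i \<noteq> t - 1 \<and> A \<subseteq> {1..n} \<and> card A = i)"
      by (simp only: Un_iff mem_Collect_eq singleton_iff disj_assoc)
    thus "subgroup H (sym_group n) \<and> H \<noteq> carrier (sym_group n)"
    proof (elim disjE exE conjE)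
      fix B1 B2 assume P: "H = partition_stabilizer n B1 B2" "B1 \<union> B2 = {1..n}" "B1 \<inter> B2 = {}"
        "card B1 = n div 2" "card B2 = n div 2"
      have "2 \<le> card B1" using P(4) h by simp
      then obtain a a' where aa: "a \<in> B1" "a' \<in> B1" "a \<noteq> a'" by (rule two_elems)
      have "card B2 \<noteq> 0" using P(5) h by simp
      hence "B2 \<noteq> {}" by auto
      then obtain b where "b \<in> B2" by blast
      thus ?thesis using P partstab_subgroup partstab_proper[OF aa \<open>b \<in> B2\<close> P(3) P(2)] by simp
    next
      assume Alt: "H = carrier (alt_group n)"
      have "transpose 1 2 permutes {1..n}" using k by (intro permutes_swap_id) auto
      moreover have "\<not> evenperm (transpose (1::nat) 2)" by (simp add: evenperm_swap)
      ultimately have "transpose 1 2 \<in> carrier (sym_group n)" "transpose 1 2 \<notin> carrier (alt_group n)"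
        by (simp_all add: sym_group_carrier alt_group_carrier)
      hence "carrier (alt_group n) \<noteq> carrier (sym_group n)" by blast
      thus ?thesis using Alt alt_group_is_subgroup by simp
    next
      fix A i assume St: "H = set_stabilizer n A" "1 \<le> i" "i \<le> t" "i \<noteq> t - 1" "A \<subseteq> {1..n}" "card A = i"
      have "A \<noteq> {}" using St(2,6) by auto
      then obtain a where a: "a \<in> A" by blast
      have "card A < card S" using St(3,6) t cardS k by linarith
      hence "A \<noteq> S" by auto
      then obtain b where b: "b \<in> {1..n}" "b \<notin> A" using St(5) unfolding S_def by blast
      show ?thesis using St setstab_subgroup setstab_proper[OF a b St(5)] by simp
    qed
  qed
  have cov: "carrier (sym_group n) \<subseteq> \<Union>?C"
  proof
    fix g assume "g \<in> carrier (sym_group n)"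
    hence gp: "g permutes {1..n}" by (simp add: sym_group_carrier)
    have inj: "inj g" using permutes_inj[OF gp] .
    have gS: "g ` S = S" unfolding S_def using gp by (rule permutes_image)
    show "g \<in> \<Union>?C"
    proof (cases "evenperm g")
      case True
      hence "g \<in> carrier (alt_group n)" using gp by (simp add: alt_group_carrier)
      thus ?thesis by blast
    next
      case False
      have "(\<exists>A\<subseteq>S. g ` A = A \<and> Gd n t (card A)) \<or> (\<exists>B\<subseteq>S. g ` B = S - B)"
        using key[OF assms(2,3) gp False] unfolding S_def .
      thus ?thesis
      proof (elim disjE exE conjE)
        fix A assume A: "A \<subseteq> S" "g ` A = A" "Gd n t (card A)"
        have gA': "g ` (S - A) = S - A" by (rule inv_diff[OF inj gS A(2)])
        have cA': "card (S - A) = n - card A" using A(1) finS cardS by (simp add: card_Diff_subset finite_subset)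
        from A(3) have "(1 \<le> card A \<and> card A \<le> t \<and> card A \<noteq> t - 1) \<or> card A = n div 2
          \<or> (n - t \<le> card A \<and> card A < n \<and> card A \<noteq> n - t + 1)" unfolding Gd_def .
        thus ?thesis
        proof (elim disjE conjE)
          assume "1 \<le> card A" "card A \<le> t" "card A \<noteq> t - 1"
          from mem_F3[OF gp A(2) this] show ?thesis using A(1) unfolding S_def by simp
        next
          assume 2: "card A = n div 2"
          have "{g ` A, g ` (S - A)} = {A, S - A}" using A(2) gA' by simp
          moreover have "A \<union> (S - A) = S" "A \<inter> (S - A) = {}" using A(1) by auto
          moreover have "card (S - A) = n div 2" using cA' 2 h k by simp
          ultimately show ?thesis using mem_F1[OF gp, of A "S - A"] 2 unfolding S_def by simp
        next
          assume 3: "n - t \<le> card A" "card A < n" "card A \<noteq> n - t + 1"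
          have "1 \<le> card (S - A)" "card (S - A) \<le> t" "card (S - A) \<noteq> t - 1"
            using 3 cA' t k by linarith+
          moreover have "S - A \<subseteq> {1..n}" unfolding S_def by blast
          ultimately show ?thesis using mem_F3[OF gp gA'] by simp
        qed
      next
        fix B assume B: "B \<subseteq> S" "g ` B = S - B"
        have "card (g ` B) = card B" using inj by (simp add: inj_on_subset card_image)
        moreover have "card (S - B) = n - card B" using B(1) finS cardS by (simp add: card_Diff_subset finite_subset)
        ultimately have "card B + card B = n" using B(2) B(1) finS cardS card_mono
          by (metis le_add_diff_inverse)
        hence cB: "card B = n div 2" "card (S - B) = n div 2" using \<open>card (S - B) = n - card B\<close> by auto
        have "g ` (S - B) = S - g ` B" using inj gS by (simp add: image_set_diff)
        also have "\<dots> = B" using B(1) unfolding B(2) by blast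
        finally have "{g ` B, g ` (S - B)} = {B, S - B}" using B(2) by (simp add: insert_commute)
        moreover have "B \<union> (S - B) = S" "B \<inter> (S - B) = {}" using B(1) by auto
        ultimately show ?thesis using mem_F1[OF gp, of B "S - B"] cB unfolding S_def by simp
      qed
    qed
  qed
  have "\<Union>?C \<subseteq> carrier (sym_group n)"
  proof (rule Union_least)
    fix H assume H: "H \<in> ?C"
    have "subgroup H (sym_group n)" using bspec[OF sub H] by (rule conjunct1)
    thus "H \<subseteq> carrier (sym_group n)" by (rule subgroup.subset)
  qed
  hence eq: "\<Union>?C = carrier (sym_group n)" using cov by (rule equalityI)
  show ?thesis unfolding is_cover_def by (rule conjI[OF sub eq])
qed


end
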